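(* For any $(2^{nR_1},2^{nR_2},n)$ code for the state-dependent discrete memoryless MAC with generalized feedback, with arbitrary state estimators $\hat S_k^n=\psi_k^n(X_k^n,Z_k^n)$, the average distortion of estimator $k\in\{1,2\}$ satisfies $$d_k^{(n)}=\mathbb E\Big[\frac1n\sum_{i=1}^nd_k(S_{ki},\hat S_{ki})\Big]\ \ge\ \frac1n\sum_{i=1}^n\mathbb E[c_k(X_{1i},X_{2i})],$$ where the expectation on the right is with respect to the distribution of $(X_{1i},X_{2i})$ induced by uniformly distributed independent messages, the states and the channel.
   Context: Model: finite alphabets $\mathcal X_k,\mathcal Z_k,\mathcal Y$, state alphabet $\mathcal S=\mathcal S_1\times\mathcal S_2$, reconstruction alphabets $\hat{\mathcal S}_k$; states $S_i=(S_{1i},S_{2i})$ i.i.d. $\sim P_S$, independent of the messages; memoryless channel $P_{YZ_1Z_2|X_1X_2S}$; encoders $x_{ki}=\phi_{ki}(w_k,z_k^{i-1})$; bounded distortion functions $d_k:\mathcal S_k\times\hat{\mathcal S}_k\to[0,\infty)$. Idealized cost: $$c_k(x_1,x_2)=\sum_{z_1,z_2}\min_{\hat s\in\hat{\mathcal S}_k}\sum_{s=(s_1,s_2)\in\mathcal S}P_S(s)P_{Z_1Z_2|X_1X_2S}(z_1,z_2|x_1,x_2,s)\,d_k(s_k,\hat s),$$ i.e. the minimum expected distortion in estimating $S_k$ from $(X_1,X_2,Z_1,Z_2)$ given $X_1=x_1,X_2=x_2$, when $S\sim P_S$ is independent of the inputs. *)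

theory Defs
  imports Complex_Main
begin

text \<open>Messages of user k range over {..<M_k}.
  Encoder k: x_{ki} = phi_k i w_k (take i zk), i.e. it depends on w_k and z_k^{i-1}.
  Channel: W x1 x2 s y z1 z2 = P_{Y Z1 Z2 | X1 X2 S}(y,z1,z2 | x1,x2,s).\<close>

definition seqs :: "nat \<Rightarrow> 'a list set" where
  "seqs n = {xs. set xs \<subseteq> UNIV \<and> length xs = n}"

definition num_msgs :: "nat \<Rightarrow> real \<Rightarrow> nat" where
  "num_msgs n R = nat \<lceil>2 powr (real n * R)\<rceil>"

definition is_pmf_fun :: "('a::finite \<Rightarrow> real) \<Rightarrow> bool" where
  "is_pmf_fun p \<longleftrightarrow> (\<forall>a. 0 \<le> p a) \<and> (\<Sum>a\<in>UNIV. p a) = 1"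

definition enc_sym :: "(nat \<Rightarrow> nat \<Rightarrow> 'z list \<Rightarrow> 'x) \<Rightarrow> nat \<Rightarrow> 'z list \<Rightarrow> nat \<Rightarrow> 'x" where
  "enc_sym phi w zs i = phi i w (take i zs)"

definition enc_seq :: "nat \<Rightarrow> (nat \<Rightarrow> nat \<Rightarrow> 'z list \<Rightarrow> 'x) \<Rightarrow> nat \<Rightarrow> 'z list \<Rightarrow> 'x list" where
  "enc_seq n phi w zs = map (enc_sym phi w zs) [0..<n]"

definition joint_prob ::
  "nat \<Rightarrow> nat \<Rightarrow> nat \<Rightarrow> ('s1 \<times> 's2 \<Rightarrow> real)
   \<Rightarrow> ('x1 \<Rightarrow> 'x2 \<Rightarrow> 's1 \<times> 's2 \<Rightarrow> 'y \<Rightarrow> 'z1 \<Rightarrow> 'z2 \<Rightarrow> real)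
   \<Rightarrow> (nat \<Rightarrow> nat \<Rightarrow> 'z1 list \<Rightarrow> 'x1) \<Rightarrow> (nat \<Rightarrow> nat \<Rightarrow> 'z2 list \<Rightarrow> 'x2)
   \<Rightarrow> nat \<Rightarrow> nat \<Rightarrow> ('s1 \<times> 's2) list \<Rightarrow> 'y list \<Rightarrow> 'z1 list \<Rightarrow> 'z2 list \<Rightarrow> real" where
  "joint_prob n M1 M2 PS W phi1 phi2 w1 w2 ss ys z1s z2s =
     (1 / real M1) * (1 / real M2) *
     (\<Prod>i<n. PS (ss ! i) *
        W (enc_sym phi1 w1 z1s i) (enc_sym phi2 w2 z2s i) (ss ! i) (ys ! i) (z1s ! i) (z2s ! i))"

definition expect ::
  "nat \<Rightarrow> nat \<Rightarrow> nat \<Rightarrow> ('s1 \<times> 's2 \<Rightarrow> real)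
   \<Rightarrow> ('x1 \<Rightarrow> 'x2 \<Rightarrow> 's1 \<times> 's2 \<Rightarrow> 'y \<Rightarrow> 'z1 \<Rightarrow> 'z2 \<Rightarrow> real)
   \<Rightarrow> (nat \<Rightarrow> nat \<Rightarrow> 'z1 list \<Rightarrow> 'x1) \<Rightarrow> (nat \<Rightarrow> nat \<Rightarrow> 'z2 list \<Rightarrow> 'x2)
   \<Rightarrow> (nat \<Rightarrow> nat \<Rightarrow> ('s1 \<times> 's2) list \<Rightarrow> 'y list \<Rightarrow> 'z1 list \<Rightarrow> 'z2 list \<Rightarrow> real) \<Rightarrow> real" where
  "expect n M1 M2 PS W phi1 phi2 f =
     (\<Sum>w1\<in>{..<M1}. \<Sum>w2\<in>{..<M2}. \<Sum>ss\<in>seqs n. \<Sum>ys\<in>seqs n. \<Sum>z1s\<in>seqs n. \<Sum>z2s\<in>seqs n.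
        joint_prob n M1 M2 PS W phi1 phi2 w1 w2 ss ys z1s z2s * f w1 w2 ss ys z1s z2s)"

definition cost1 :: "('s1 \<times> 's2 \<Rightarrow> real)
   \<Rightarrow> ('x1 \<Rightarrow> 'x2 \<Rightarrow> 's1 \<times> 's2 \<Rightarrow> 'y::finite \<Rightarrow> 'z1::finite \<Rightarrow> 'z2::finite \<Rightarrow> real)
   \<Rightarrow> ('s1 \<Rightarrow> 'h1 \<Rightarrow> real) \<Rightarrow> 'x1 \<Rightarrow> 'x2 \<Rightarrow> real" where
  "cost1 PS W d1 x1 x2 =
     (\<Sum>z1\<in>UNIV. \<Sum>z2\<in>UNIV. Min ((\<lambda>sh. \<Sum>s\<in>UNIV. PS s * (\<Sum>y\<in>UNIV. W x1 x2 s y z1 z2) * d1 (fst s) sh) ` UNIV))"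

definition cost2 :: "('s1 \<times> 's2 \<Rightarrow> real)
   \<Rightarrow> ('x1 \<Rightarrow> 'x2 \<Rightarrow> 's1 \<times> 's2 \<Rightarrow> 'y::finite \<Rightarrow> 'z1::finite \<Rightarrow> 'z2::finite \<Rightarrow> real)
   \<Rightarrow> ('s2 \<Rightarrow> 'h2 \<Rightarrow> real) \<Rightarrow> 'x1 \<Rightarrow> 'x2 \<Rightarrow> real" where
  "cost2 PS W d2 x1 x2 =
     (\<Sum>z1\<in>UNIV. \<Sum>z2\<in>UNIV. Min ((\<lambda>sh. \<Sum>s\<in>UNIV. PS s * (\<Sum>y\<in>UNIV. W x1 x2 s y z1 z2) * d2 (snd s) sh) ` UNIV))"

end

theory Submission
  imports Defs
begin


definition Pk :: "(nat \<Rightarrow> 'e list \<Rightarrow> 'e \<Rightarrow> real) \<Rightarrow> 'e list \<Rightarrow> real" where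
  "Pk K es = (\<Prod>j<length es. K j (take j es) (es!j))"

lemma finL: "finite {es::'e::finite list. length es = n}"
  using finite_lists_length_eq[of "UNIV::'e set" n] by simp

lemma Pk_Nil[simp]: "Pk K [] = 1" by (simp add: Pk_def)

lemma Pk_snoc: "Pk K (zs@[z]) = Pk K zs * K (length zs) zs z"
  unfolding Pk_def by (simp add: nth_append)

lemma Pk_append: "Pk K (xs@ys) = Pk K xs * Pk (\<lambda>j p. K (length xs + j) (xs@p)) ys"
proof (induction ys rule: rev_induct)
  case Nil then show ?case by simp
next
  case (snoc y ys)
  have "Pk K (xs@ys@[y]) = Pk K (xs@ys) * K (length (xs@ys)) (xs@ys) y"
    using Pk_snoc[of K "xs@ys" y] by simp
  then show ?case using snoc by (simp add: Pk_snoc)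
qed

lemma sum_L_Suc:
  fixes f :: "'e::finite list \<Rightarrow> real"
  shows "(\<Sum>es\<in>{es. length es = Suc n}. f es) = (\<Sum>xs\<in>{es. length es = n}. \<Sum>e\<in>UNIV. f (xs@[e]))"
proof -
  have b: "bij_betw (\<lambda>(xs,e). xs@[e]) ({es. length es = n} \<times> UNIV) {es::'e list. length es = Suc n}"
    by (rule bij_betw_byWitness[where f'="\<lambda>es. (butlast es, last es)"])
      (auto intro!: append_butlast_last_id simp: image_def)
  have "(\<Sum>es\<in>{es. length es = Suc n}. f es) = (\<Sum>x\<in>{es. length es = n} \<times> UNIV. f ((\<lambda>(xs,e). xs@[e]) x))"
    using sum.reindex_bij_betw[OF b, of f] by simp
  also have "\<dots> = (\<Sum>xs\<in>{es. length es = n}. \<Sum>e\<in>UNIV. f (xs@[e]))"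
    by (simp add: sum.cartesian_product split_def)
  finally show ?thesis .
qed

lemma sum_L_split:
  fixes f :: "'e::finite list \<Rightarrow> real"
  shows "(\<Sum>es\<in>{es. length es = i + Suc m}. f es) =
     (\<Sum>pre\<in>{es. length es = i}. \<Sum>e\<in>UNIV. \<Sum>post\<in>{es. length es = m}. f (pre@e#post))"
proof -
  have b: "bij_betw (\<lambda>(pre,e,post). pre@e#post) ({es. length es = i} \<times> UNIV \<times> {es. length es = m}) {es::'e list. length es = i + Suc m}"
    by (rule bij_betw_byWitness[where f'="\<lambda>es. (take i es, es!i, drop (Suc i) es)"])
      (auto simp: nth_append id_take_nth_drop[symmetric] image_def)
  have "(\<Sum>es\<in>{es. length es = i + Suc m}. f es) = (\<Sum>x\<in>{es. length es = i} \<times> UNIV \<times> {es. length es = m}. f ((\<lambda>(pre,e,post). pre@e#post) x))"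
    using sum.reindex_bij_betw[OF b, of f] by simp
  also have "\<dots> = (\<Sum>pre\<in>{es. length es = i}. \<Sum>e\<in>UNIV. \<Sum>post\<in>{es. length es = m}. f (pre@e#post))"
    by (simp add: sum.cartesian_product split_def)
  finally show ?thesis .
qed

lemma marg:
  fixes K :: "nat \<Rightarrow> 'e::finite list \<Rightarrow> 'e \<Rightarrow> real"
  assumes K1: "\<And>j p. (\<Sum>e\<in>UNIV. K j p e) = 1" and "m \<le> n"
  shows "(\<Sum>es\<in>{es. length es = n}. Pk K es * F (take m es)) = (\<Sum>es\<in>{es. length es = m}. Pk K es * F es)"
  using assms(2)
proof (induction n)
  case 0 then show ?case by simp
next
  case (Suc n)
  show ?case
  proof (cases "m = Suc n")
    case True then show ?thesis by (intro sum.cong) auto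
  next
    case False
    then have mn: "m \<le> n" using Suc by simp
    have "(\<Sum>es\<in>{es. length es = Suc n}. Pk K es * F (take m es))
        = (\<Sum>xs\<in>{es. length es = n}. \<Sum>e\<in>UNIV. Pk K xs * F (take m xs) * K n xs e)"
      by (subst sum_L_Suc) (intro sum.cong refl, use mn in \<open>auto simp: Pk_snoc\<close>)
    also have "\<dots> = (\<Sum>xs\<in>{es. length es = n}. Pk K xs * F (take m xs))"
      by (simp add: sum_distrib_left[symmetric] K1)
    finally show ?thesis using Suc.IH mn by simp
  qed
qed

lemma norm1:
  fixes K :: "nat \<Rightarrow> 'e::finite list \<Rightarrow> 'e \<Rightarrow> real"
  assumes K1: "\<And>j p. (\<Sum>e\<in>UNIV. K j p e) = 1"
  shows "(\<Sum>es\<in>{es. length es = n}. Pk K es) = 1"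
  using marg[OF K1, where m=0 and n=n and F="\<lambda>_. 1::real"] by simp

lemma sum_UNIV3:
  fixes g :: "'s::finite \<times> 'y::finite \<times> 'z::finite \<Rightarrow> real"
  shows "(\<Sum>e\<in>UNIV. g e) = (\<Sum>s\<in>UNIV. \<Sum>y\<in>UNIV. \<Sum>z\<in>UNIV. g (s,y,z))"
  by (simp add: sum.cartesian_product UNIV_Times_UNIV[symmetric] del: UNIV_Times_UNIV)

lemma swap4:
  fixes X :: "'s \<Rightarrow> 'y \<Rightarrow> 'z \<Rightarrow> 'p \<Rightarrow> real"
  shows "(\<Sum>s\<in>A. \<Sum>y\<in>B. \<Sum>z\<in>C. \<Sum>p\<in>P. X s y z p) = (\<Sum>z\<in>C. \<Sum>p\<in>P. \<Sum>s\<in>A. \<Sum>y\<in>B. X s y z p)"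
proof -
  have "(\<Sum>s\<in>A. \<Sum>y\<in>B. \<Sum>z\<in>C. \<Sum>p\<in>P. X s y z p) = (\<Sum>s\<in>A. \<Sum>z\<in>C. \<Sum>y\<in>B. \<Sum>p\<in>P. X s y z p)"
    by (intro sum.cong refl, rule sum.swap)
  also have "\<dots> = (\<Sum>z\<in>C. \<Sum>s\<in>A. \<Sum>y\<in>B. \<Sum>p\<in>P. X s y z p)"
    by (rule sum.swap)
  also have "\<dots> = (\<Sum>z\<in>C. \<Sum>s\<in>A. \<Sum>p\<in>P. \<Sum>y\<in>B. X s y z p)"
    by (intro sum.cong refl, rule sum.swap)
  also have "\<dots> = (\<Sum>z\<in>C. \<Sum>p\<in>P. \<Sum>s\<in>A. \<Sum>y\<in>B. X s y z p)"
    by (intro sum.cong refl, rule sum.swap)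
  finally show ?thesis .
qed

lemma step_i:
  fixes PS :: "'s::finite \<Rightarrow> real" and V :: "nat \<Rightarrow> 'z::finite list \<Rightarrow> 's \<Rightarrow> 'y::finite \<Rightarrow> 'z \<Rightarrow> real"
    and D :: "'s \<Rightarrow> 'h::finite \<Rightarrow> real" and H :: "'z list \<Rightarrow> 'h"
  defines "K \<equiv> (\<lambda>j (p::('s \<times> 'y \<times> 'z) list) e. PS (fst e) * V j (map (snd \<circ> snd) p) (fst e) (fst (snd e)) (snd (snd e)))"
  assumes PSn: "\<And>s. 0 \<le> PS s" and Vn: "\<And>j zp s y z. 0 \<le> V j zp s y z"
    and V1: "\<And>j zp. (\<Sum>e\<in>UNIV. PS (fst e) * V j zp (fst e) (fst (snd e)) (snd (snd e))) = 1"
    and "i < n"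
  shows "(\<Sum>es\<in>{es. length es = n}. Pk K es * D (fst (es!i)) (H (map (snd \<circ> snd) es)))
     \<ge> (\<Sum>pre\<in>{es. length es = i}. Pk K pre *
          (\<Sum>z\<in>UNIV. Min ((\<lambda>sh. \<Sum>s\<in>UNIV. PS s * (\<Sum>y\<in>UNIV. V i (map (snd \<circ> snd) pre) s y z) * D s sh) ` UNIV)))"
proof -
  define m where "m = n - Suc i"
  have n: "n = i + Suc m" using \<open>i < n\<close> m_def by simp
  define zm :: "('s \<times> 'y \<times> 'z) list \<Rightarrow> 'z list" where "zm = map (snd \<circ> snd)"
  define Q where "Q = (\<lambda>pre z post. Pk (\<lambda>j p e. PS (fst e) * V (i + Suc j) (zm pre @ z # zm p) (fst e) (fst (snd e)) (snd (snd e))) post)"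
  define G where "G = (\<lambda>pre z sh. \<Sum>s\<in>UNIV. PS s * (\<Sum>y\<in>UNIV. V i (zm pre) s y z) * D s sh)"
  have Knn: "0 \<le> K j p e" for j p e unfolding K_def by (intro mult_nonneg_nonneg PSn Vn)
  have Pkn: "0 \<le> Pk K es" for es unfolding Pk_def by (intro prod_nonneg) (simp add: Knn)
  have Qn: "0 \<le> Q pre z post" for pre z post unfolding Q_def Pk_def
    by (intro prod_nonneg ballI mult_nonneg_nonneg PSn Vn)
  have Q1: "(\<Sum>post\<in>{es. length es = m}. Q pre z post) = 1" for pre z
    unfolding Q_def by (rule norm1) (rule V1)
  have PkD: "Pk K (pre@(s,y,z)#post) = Pk K pre * (PS s * V i (zm pre) s y z) * Q pre z post"
    if "length pre = i" for pre s y z post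
  proof -
    have "Pk K (pre@(s,y,z)#post) = Pk K pre * Pk (\<lambda>j p. K (i + j) (pre @ p)) ([(s,y,z)] @ post)"
      using Pk_append[of K pre "(s,y,z)#post"] that by simp
    also have "Pk (\<lambda>j p. K (i + j) (pre @ p)) ([(s,y,z)] @ post) = 
       K i pre (s,y,z) * Pk (\<lambda>j p. K (i + (1 + j)) (pre @ [(s,y,z)] @ p)) post"
      by (subst Pk_append) (simp add: Pk_def)
    also have "Pk (\<lambda>j p. K (i + (1 + j)) (pre @ [(s,y,z)] @ p)) post = Q pre z post"
      unfolding Q_def K_def zm_def by (simp add: comp_def)
    finally show ?thesis unfolding K_def zm_def by simp
  qed
  have LHS: "(\<Sum>es\<in>{es. length es = n}. Pk K es * D (fst (es!i)) (H (zm es)))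
     = (\<Sum>pre\<in>{es. length es = i}. Pk K pre * (\<Sum>z\<in>UNIV. \<Sum>post\<in>{es. length es = m}.
            Q pre z post * G pre z (H (zm pre @ z # zm post))))"
  proof -
    have "(\<Sum>es\<in>{es. length es = n}. Pk K es * D (fst (es!i)) (H (zm es)))
       = (\<Sum>pre\<in>{es. length es = i}. \<Sum>e\<in>UNIV. \<Sum>post\<in>{es. length es = m}.
             Pk K (pre@e#post) * D (fst e) (H (zm pre @ snd (snd e) # zm post)))"
      unfolding n by (subst sum_L_split) (simp add: nth_append zm_def)
    also have "\<dots> = (\<Sum>pre\<in>{es. length es = i}. Pk K pre * (\<Sum>z\<in>UNIV. \<Sum>post\<in>{es. length es = m}.
            Q pre z post * G pre z (H (zm pre @ z # zm post))))"
    proof (intro sum.cong refl)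
      fix pre :: "('s \<times> 'y \<times> 'z) list" assume "pre \<in> {es. length es = i}"
      then have lp: "length pre = i" by simp
      have "(\<Sum>e\<in>UNIV. \<Sum>post\<in>{es. length es = m}.
             Pk K (pre@e#post) * D (fst e) (H (zm pre @ snd (snd e) # zm post)))
          = (\<Sum>s\<in>UNIV. \<Sum>y\<in>UNIV. \<Sum>z\<in>UNIV. \<Sum>post\<in>{es. length es = m}.
             Pk K pre * (PS s * V i (zm pre) s y z * Q pre z post * D s (H (zm pre @ z # zm post))))"
        by (subst sum_UNIV3) (simp add: PkD[OF lp] mult_ac)
      also have "\<dots> = (\<Sum>z\<in>UNIV. \<Sum>post\<in>{es. length es = m}. \<Sum>s\<in>UNIV. \<Sum>y\<in>UNIV.
             Pk K pre * (PS s * V i (zm pre) s y z * Q pre z post * D s (H (zm pre @ z # zm post))))"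
        by (rule swap4)
      also have "\<dots> = Pk K pre * (\<Sum>z\<in>UNIV. \<Sum>post\<in>{es. length es = m}.
            Q pre z post * G pre z (H (zm pre @ z # zm post)))"
        unfolding G_def by (simp add: sum_distrib_left sum_distrib_right mult_ac)
      finally show "(\<Sum>e\<in>UNIV. \<Sum>post\<in>{es. length es = m}.
             Pk K (pre@e#post) * D (fst e) (H (zm pre @ snd (snd e) # zm post))) = 
             Pk K pre * (\<Sum>z\<in>UNIV. \<Sum>post\<in>{es. length es = m}.
            Q pre z post * G pre z (H (zm pre @ z # zm post)))" .
    qed
    finally show ?thesis .
  qed
  have "(\<Sum>pre\<in>{es. length es = i}. Pk K pre * (\<Sum>z\<in>UNIV. Min (G pre z ` UNIV)))
     \<le> (\<Sum>pre\<in>{es. length es = i}. Pk K pre * (\<Sum>z\<in>UNIV. \<Sum>post\<in>{es. length es = m}.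
            Q pre z post * G pre z (H (zm pre @ z # zm post))))"
  proof (intro sum_mono mult_left_mono Pkn)
    fix pre z
    have "Min (G pre z ` UNIV) = (\<Sum>post\<in>{es. length es = m}. Q pre z post * Min (G pre z ` UNIV))"
      by (simp add: sum_distrib_right[symmetric] Q1)
    also have "\<dots> \<le> (\<Sum>post\<in>{es. length es = m}. Q pre z post * G pre z (H (zm pre @ z # zm post)))"
      by (intro sum_mono mult_left_mono Qn Min_le) auto
    finally show "Min (G pre z ` UNIV) \<le> (\<Sum>post\<in>{es. length es = m}. Q pre z post * G pre z (H (zm pre @ z # zm post)))" .
  qed
  then show ?thesis using LHS unfolding G_def zm_def by simp
qed

lemma sum_seqs4:
  fixes g :: "'a::finite list \<Rightarrow> 'b::finite list \<Rightarrow> 'c::finite list \<Rightarrow> 'd::finite list \<Rightarrow> real"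
  shows "(\<Sum>ss\<in>seqs n. \<Sum>ys\<in>seqs n. \<Sum>z1s\<in>seqs n. \<Sum>z2s\<in>seqs n. g ss ys z1s z2s)
    = (\<Sum>es\<in>{es. length es = n}. g (map fst es) (map (fst \<circ> snd) es) (map (fst \<circ> snd \<circ> snd) es) (map (snd \<circ> snd \<circ> snd) es))"
proof -
  have sq: "seqs n = {xs. length xs = n}" for n by (simp add: seqs_def)
  define T where "T = (\<lambda>es::('a \<times> 'b \<times> 'c \<times> 'd) list. (map fst es, map (fst \<circ> snd) es, map (fst \<circ> snd \<circ> snd) es, map (snd \<circ> snd \<circ> snd) es))"
  have b: "bij_betw T {es. length es = n} ({xs. length xs = n} \<times> {xs. length xs = n} \<times> {xs. length xs = n} \<times> {xs. length xs = n})"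
    unfolding T_def
    by (rule bij_betw_byWitness[where f'="\<lambda>(a,b,c,d). zip a (zip b (zip c d))"])
      (auto simp: image_def zip_map_fst_snd map_fst_zip map_snd_zip comp_def intro!: nth_equalityI)
  have "(\<Sum>ss\<in>seqs n. \<Sum>ys\<in>seqs n. \<Sum>z1s\<in>seqs n. \<Sum>z2s\<in>seqs n. g ss ys z1s z2s)
      = (\<Sum>x\<in>{xs. length xs = n} \<times> {xs. length xs = n} \<times> {xs. length xs = n} \<times> {xs. length xs = n}. case x of (a,b,c,d) \<Rightarrow> g a b c d)"
    by (simp add: sq sum.cartesian_product split_def)
  also have "\<dots> = (\<Sum>es\<in>{es. length es = n}. (case T es of (a,b,c,d) \<Rightarrow> g a b c d))"
    using sum.reindex_bij_betw[OF b, of "\<lambda>x. case x of (a,b,c,d) \<Rightarrow> g a b c d"] by simp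
  finally show ?thesis by (simp add: T_def)
qed

definition VV :: "('x1 \<Rightarrow> 'x2 \<Rightarrow> 's \<Rightarrow> 'y \<Rightarrow> 'z1 \<Rightarrow> 'z2 \<Rightarrow> real) \<Rightarrow> (nat \<Rightarrow> nat \<Rightarrow> 'z1 list \<Rightarrow> 'x1) \<Rightarrow> (nat \<Rightarrow> nat \<Rightarrow> 'z2 list \<Rightarrow> 'x2)
   \<Rightarrow> nat \<Rightarrow> nat \<Rightarrow> nat \<Rightarrow> ('z1 \<times> 'z2) list \<Rightarrow> 's \<Rightarrow> 'y \<Rightarrow> 'z1 \<times> 'z2 \<Rightarrow> real" where
  "VV W phi1 phi2 w1 w2 j zp s y z = W (phi1 j w1 (map fst zp)) (phi2 j w2 (map snd zp)) s y (fst z) (snd z)"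

definition KK :: "('s \<Rightarrow> real) \<Rightarrow> ('x1 \<Rightarrow> 'x2 \<Rightarrow> 's \<Rightarrow> 'y \<Rightarrow> 'z1 \<Rightarrow> 'z2 \<Rightarrow> real) \<Rightarrow> (nat \<Rightarrow> nat \<Rightarrow> 'z1 list \<Rightarrow> 'x1) \<Rightarrow> (nat \<Rightarrow> nat \<Rightarrow> 'z2 list \<Rightarrow> 'x2)
   \<Rightarrow> nat \<Rightarrow> nat \<Rightarrow> nat \<Rightarrow> ('s \<times> 'y \<times> 'z1 \<times> 'z2) list \<Rightarrow> 's \<times> 'y \<times> 'z1 \<times> 'z2 \<Rightarrow> real" where
  "KK PS W phi1 phi2 w1 w2 = (\<lambda>j p e. PS (fst e) * VV W phi1 phi2 w1 w2 j (map (snd \<circ> snd) p) (fst e) (fst (snd e)) (snd (snd e)))"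

lemma expect_conv:
  fixes PS :: "'s1::finite \<times> 's2::finite \<Rightarrow> real"
    and W :: "'x1 \<Rightarrow> 'x2 \<Rightarrow> 's1 \<times> 's2 \<Rightarrow> 'y::finite \<Rightarrow> 'z1::finite \<Rightarrow> 'z2::finite \<Rightarrow> real"
  shows "expect n M1 M2 PS W phi1 phi2 f = (\<Sum>w1\<in>{..<M1}. \<Sum>w2\<in>{..<M2}. (1 / real M1 * (1 / real M2)) *
     (\<Sum>es\<in>{es. length es = n}. Pk (KK PS W phi1 phi2 w1 w2) es *
        f w1 w2 (map fst es) (map (fst \<circ> snd) es) (map (fst \<circ> snd \<circ> snd) es) (map (snd \<circ> snd \<circ> snd) es)))"
  unfolding expect_def
proof (intro sum.cong refl)
  fix w1 w2
  show "(\<Sum>ss\<in>seqs n. \<Sum>ys\<in>seqs n. \<Sum>z1s\<in>seqs n. \<Sum>z2s\<in>seqs n.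
           joint_prob n M1 M2 PS W phi1 phi2 w1 w2 ss ys z1s z2s * f w1 w2 ss ys z1s z2s) =
        1 / real M1 * (1 / real M2) *
        (\<Sum>es\<in>{es. length es = n}. Pk (KK PS W phi1 phi2 w1 w2) es *
           f w1 w2 (map fst es) (map (fst \<circ> snd) es) (map (fst \<circ> snd \<circ> snd) es) (map (snd \<circ> snd \<circ> snd) es))"
    unfolding sum_seqs4 sum_distrib_left
  proof (intro sum.cong refl)
    fix es :: "(('s1 \<times> 's2) \<times> 'y \<times> 'z1 \<times> 'z2) list" assume "es \<in> {es. length es = n}"
    then have l: "length es = n" by simp
    have "joint_prob n M1 M2 PS W phi1 phi2 w1 w2 (map fst es) (map (fst \<circ> snd) es) (map (fst \<circ> snd \<circ> snd) es) (map (snd \<circ> snd \<circ> snd) es)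
       = 1 / real M1 * (1 / real M2) * Pk (KK PS W phi1 phi2 w1 w2) es"
      unfolding joint_prob_def Pk_def KK_def VV_def enc_sym_def using l
      by (simp add: take_map map_map comp_def)
    then show "joint_prob n M1 M2 PS W phi1 phi2 w1 w2 (map fst es) (map (fst \<circ> snd) es) (map (fst \<circ> snd \<circ> snd) es) (map (snd \<circ> snd \<circ> snd) es) *
          f w1 w2 (map fst es) (map (fst \<circ> snd) es) (map (fst \<circ> snd \<circ> snd) es) (map (snd \<circ> snd \<circ> snd) es) =
          1 / real M1 * (1 / real M2) * (Pk (KK PS W phi1 phi2 w1 w2) es *
           f w1 w2 (map fst es) (map (fst \<circ> snd) es) (map (fst \<circ> snd \<circ> snd) es) (map (snd \<circ> snd \<circ> snd) es))"
      by simp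
  qed
qed

lemma swap3:
  fixes X :: "nat \<Rightarrow> nat \<Rightarrow> nat \<Rightarrow> real"
  shows "(\<Sum>i\<in>I. \<Sum>a\<in>A. \<Sum>b\<in>B. X i a b) = (\<Sum>a\<in>A. \<Sum>b\<in>B. \<Sum>i\<in>I. X i a b)"
proof -
  have "(\<Sum>i\<in>I. \<Sum>a\<in>A. \<Sum>b\<in>B. X i a b) = (\<Sum>a\<in>A. \<Sum>i\<in>I. \<Sum>b\<in>B. X i a b)" by (rule sum.swap)
  also have "\<dots> = (\<Sum>a\<in>A. \<Sum>b\<in>B. \<Sum>i\<in>I. X i a b)" by (rule sum.cong[OF refl], rule sum.swap)
  finally show ?thesis .
qed

lemma main_gen:
  fixes PS :: "'s1::finite \<times> 's2::finite \<Rightarrow> real"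
    and W :: "'x1::finite \<Rightarrow> 'x2::finite \<Rightarrow> 's1 \<times> 's2 \<Rightarrow> 'y::finite \<Rightarrow> 'z1::finite \<Rightarrow> 'z2::finite \<Rightarrow> real"
    and phi1 :: "nat \<Rightarrow> nat \<Rightarrow> 'z1 list \<Rightarrow> 'x1" and phi2 :: "nat \<Rightarrow> nat \<Rightarrow> 'z2 list \<Rightarrow> 'x2"
    and Dk :: "'s1 \<times> 's2 \<Rightarrow> 'h::finite \<Rightarrow> real" and Hk :: "nat \<Rightarrow> nat \<Rightarrow> nat \<Rightarrow> 'z1 list \<Rightarrow> 'z2 list \<Rightarrow> 'h"
  assumes pPS: "is_pmf_fun PS"
    and pW: "\<And>x1 x2 s. is_pmf_fun (\<lambda>(y, z1, z2). W x1 x2 s y z1 z2)"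
  shows "expect n M1 M2 PS W phi1 phi2 (\<lambda>w1 w2 ss ys z1s z2s. (1 / real n) * (\<Sum>i<n. Dk (ss!i) (Hk i w1 w2 z1s z2s)))
    \<ge> (1 / real n) * (\<Sum>i<n. expect n M1 M2 PS W phi1 phi2 (\<lambda>w1 w2 ss ys z1s z2s.
          \<Sum>z1\<in>UNIV. \<Sum>z2\<in>UNIV. Min ((\<lambda>sh. \<Sum>s\<in>UNIV. PS s * (\<Sum>y\<in>UNIV. W (enc_sym phi1 w1 z1s i) (enc_sym phi2 w2 z2s i) s y z1 z2) * Dk s sh) ` UNIV)))"
proof -
  define c where "c = 1 / real M1 * (1 / real M2)"
  have c0: "0 \<le> c" unfolding c_def by simp
  have PSn: "0 \<le> PS s" for s using pPS unfolding is_pmf_fun_def by (cases s) simp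
  have Wn: "0 \<le> W x1 x2 s y z1 z2" for x1 x2 s y z1 z2
    using pW[of x1 x2 s] unfolding is_pmf_fun_def by (auto dest: spec[of _ "(y,z1,z2)"])
  have Vn: "0 \<le> VV W phi1 phi2 w1 w2 j zp s y z" for w1 w2 j zp s y z
    unfolding VV_def by (rule Wn)
  have V1: "(\<Sum>e\<in>UNIV. PS (fst e) * VV W phi1 phi2 w1 w2 j zp (fst e) (fst (snd e)) (snd (snd e))) = 1" for w1 w2 j zp
  proof -
    have "(\<Sum>e\<in>UNIV. PS (fst e) * VV W phi1 phi2 w1 w2 j zp (fst e) (fst (snd e)) (snd (snd e)))
       = (\<Sum>s\<in>UNIV. PS s * (\<Sum>r\<in>UNIV. (\<lambda>(y, z1, z2). W (phi1 j w1 (map fst zp)) (phi2 j w2 (map snd zp)) s y z1 z2) r))"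
      by (simp add: sum.cartesian_product UNIV_Times_UNIV[symmetric] sum_distrib_left VV_def split_def del: UNIV_Times_UNIV)
    also have "\<dots> = (\<Sum>s\<in>UNIV. PS s)" using pW unfolding is_pmf_fun_def by simp
    also have "\<dots> = 1" using pPS unfolding is_pmf_fun_def by simp
    finally show ?thesis .
  qed
  define K where "K = KK PS W phi1 phi2"
  define Ed where "Ed = (\<lambda>i w1 w2. \<Sum>es\<in>{es. length es = n}. Pk (K w1 w2) es *
       Dk (map fst es ! i) (Hk i w1 w2 (map (fst \<circ> snd \<circ> snd) es) (map (snd \<circ> snd \<circ> snd) es)))"
  define C where "C = (\<lambda>i w1 w2 z1s z2s. \<Sum>z1\<in>UNIV. \<Sum>z2\<in>UNIV. Min ((\<lambda>sh. \<Sum>s\<in>UNIV. PS s * (\<Sum>y\<in>UNIV. W (enc_sym phi1 w1 z1s i) (enc_sym phi2 w2 z2s i) s y z1 z2) * Dk s sh) ` UNIV))"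
  define Ec where "Ec = (\<lambda>i w1 w2. \<Sum>es\<in>{es. length es = n}. Pk (K w1 w2) es *
       C i w1 w2 (map (fst \<circ> snd \<circ> snd) es) (map (snd \<circ> snd \<circ> snd) es))"
  have per: "Ec i w1 w2 \<le> Ed i w1 w2" if "i < n" for i w1 w2
  proof -
    define F where "F = (\<lambda>pre::(('s1 \<times> 's2) \<times> 'y \<times> 'z1 \<times> 'z2) list. C i w1 w2 (map (fst \<circ> snd \<circ> snd) pre) (map (snd \<circ> snd \<circ> snd) pre))"
    have K1: "(\<Sum>e\<in>UNIV. K w1 w2 j p e) = 1" for j p
      unfolding K_def KK_def by (rule V1)
    have "Ec i w1 w2 = (\<Sum>es\<in>{es. length es = n}. Pk (K w1 w2) es * F (take i es))"
      unfolding Ec_def F_def C_def enc_sym_def by (simp add: take_map)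
    also have "\<dots> = (\<Sum>pre\<in>{es. length es = i}. Pk (K w1 w2) pre * F pre)"
      by (rule marg[OF K1]) (use that in simp)
    also have "\<dots> = (\<Sum>pre\<in>{es. length es = i}. Pk (K w1 w2) pre *
          (\<Sum>z\<in>UNIV. Min ((\<lambda>sh. \<Sum>s\<in>UNIV. PS s * (\<Sum>y\<in>UNIV. VV W phi1 phi2 w1 w2 i (map (snd \<circ> snd) pre) s y z) * Dk s sh) ` UNIV)))"
      unfolding F_def C_def enc_sym_def VV_def
      by (simp add: sum.cartesian_product UNIV_Times_UNIV[symmetric] split_def take_map map_map comp_def del: UNIV_Times_UNIV)
    also have "\<dots> \<le> (\<Sum>es\<in>{es. length es = n}. Pk (K w1 w2) es * Dk (fst (es!i)) ((\<lambda>zs. Hk i w1 w2 (map fst zs) (map snd zs)) (map (snd \<circ> snd) es)))"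
      unfolding K_def KK_def
      by (rule step_i[where V="VV W phi1 phi2 w1 w2", OF PSn Vn V1 that])
    also have "\<dots> = Ed i w1 w2"
      unfolding Ed_def by (intro sum.cong refl) (use that in \<open>auto simp: map_map comp_def\<close>)
    finally show ?thesis .
  qed
  have lhs: "expect n M1 M2 PS W phi1 phi2 (\<lambda>w1 w2 ss ys z1s z2s. (1 / real n) * (\<Sum>i<n. Dk (ss!i) (Hk i w1 w2 z1s z2s)))
     = (\<Sum>w1\<in>{..<M1}. \<Sum>w2\<in>{..<M2}. c * ((1 / real n) * (\<Sum>i<n. Ed i w1 w2)))"
    unfolding expect_conv Ed_def c_def K_def
    by (simp add: sum_distrib_left sum_distrib_right mult_ac sum.swap[of _ "{..<n}"])
  have rhs: "(1 / real n) * (\<Sum>i<n. expect n M1 M2 PS W phi1 phi2 (\<lambda>w1 w2 ss ys z1s z2s. C i w1 w2 z1s z2s))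
     = (\<Sum>w1\<in>{..<M1}. \<Sum>w2\<in>{..<M2}. c * ((1 / real n) * (\<Sum>i<n. Ec i w1 w2)))"
  proof -
    have "(1 / real n) * (\<Sum>i<n. expect n M1 M2 PS W phi1 phi2 (\<lambda>w1 w2 ss ys z1s z2s. C i w1 w2 z1s z2s))
       = (\<Sum>i<n. \<Sum>w1\<in>{..<M1}. \<Sum>w2\<in>{..<M2}. c * ((1 / real n) * Ec i w1 w2))"
      unfolding expect_conv Ec_def c_def K_def by (simp add: sum_distrib_left mult_ac)
    also have "\<dots> = (\<Sum>w1\<in>{..<M1}. \<Sum>w2\<in>{..<M2}. \<Sum>i<n. c * ((1 / real n) * Ec i w1 w2))"
      by (rule swap3)
    also have "\<dots> = (\<Sum>w1\<in>{..<M1}. \<Sum>w2\<in>{..<M2}. c * ((1 / real n) * (\<Sum>i<n. Ec i w1 w2)))"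
      by (simp add: sum_distrib_left)
    finally show ?thesis .
  qed
  have "(\<Sum>w1\<in>{..<M1}. \<Sum>w2\<in>{..<M2}. c * ((1 / real n) * (\<Sum>i<n. Ec i w1 w2)))
     \<le> (\<Sum>w1\<in>{..<M1}. \<Sum>w2\<in>{..<M2}. c * ((1 / real n) * (\<Sum>i<n. Ed i w1 w2)))"
    by (intro sum_mono mult_left_mono c0) (auto intro: per)
  then show ?thesis using lhs rhs unfolding C_def by simp
qed


theorem mainTheorem5:
  fixes n :: nat and R1 R2 :: real
    and PS :: "'s1::finite \<times> 's2::finite \<Rightarrow> real"
    and W :: "'x1::finite \<Rightarrow> 'x2::finite \<Rightarrow> 's1 \<times> 's2 \<Rightarrow> 'y::finite \<Rightarrow> 'z1::finite \<Rightarrow> 'z2::finite \<Rightarrow> real"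
    and d1 :: "'s1 \<Rightarrow> 'h1::finite \<Rightarrow> real" and d2 :: "'s2 \<Rightarrow> 'h2::finite \<Rightarrow> real"
    and phi1 :: "nat \<Rightarrow> nat \<Rightarrow> 'z1 list \<Rightarrow> 'x1" and phi2 :: "nat \<Rightarrow> nat \<Rightarrow> 'z2 list \<Rightarrow> 'x2"
    and psi1 :: "nat \<Rightarrow> 'x1 list \<Rightarrow> 'z1 list \<Rightarrow> 'h1"
    and psi2 :: "nat \<Rightarrow> 'x2 list \<Rightarrow> 'z2 list \<Rightarrow> 'h2"
  assumes "0 \<le> R1" and "0 \<le> R2"
    and "is_pmf_fun PS"
    and "\<And>x1 x2 s. is_pmf_fun (\<lambda>(y, z1, z2). W x1 x2 s y z1 z2)"
    and "\<And>s h. 0 \<le> d1 s h" and "\<And>s h. 0 \<le> d2 s h"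
  defines "M1 \<equiv> num_msgs n R1" and "M2 \<equiv> num_msgs n R2"
  shows "(expect n M1 M2 PS W phi1 phi2
           (\<lambda>w1 w2 ss ys z1s z2s. (1 / real n) *
              (\<Sum>i<n. d1 (fst (ss ! i)) (psi1 i (enc_seq n phi1 w1 z1s) z1s)))
         \<ge> (1 / real n) * (\<Sum>i<n. expect n M1 M2 PS W phi1 phi2
              (\<lambda>w1 w2 ss ys z1s z2s. cost1 PS W d1 (enc_sym phi1 w1 z1s i) (enc_sym phi2 w2 z2s i))))
    \<and> (expect n M1 M2 PS W phi1 phi2
           (\<lambda>w1 w2 ss ys z1s z2s. (1 / real n) *
              (\<Sum>i<n. d2 (snd (ss ! i)) (psi2 i (enc_seq n phi2 w2 z2s) z2s)))
         \<ge> (1 / real n) * (\<Sum>i<n. expect n M1 M2 PS W phi1 phi2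
              (\<lambda>w1 w2 ss ys z1s z2s. cost2 PS W d2 (enc_sym phi1 w1 z1s i) (enc_sym phi2 w2 z2s i))))"
proof -
  have A: "expect n M1 M2 PS W phi1 phi2 (\<lambda>w1 w2 ss ys z1s z2s. (1 / real n) * (\<Sum>i<n. d1 (fst (ss!i)) (psi1 i (enc_seq n phi1 w1 z1s) z1s)))
    \<ge> (1 / real n) * (\<Sum>i<n. expect n M1 M2 PS W phi1 phi2 (\<lambda>w1 w2 ss ys z1s z2s.
          \<Sum>z1\<in>UNIV. \<Sum>z2\<in>UNIV. Min ((\<lambda>sh. \<Sum>s\<in>UNIV. PS s * (\<Sum>y\<in>UNIV. W (enc_sym phi1 w1 z1s i) (enc_sym phi2 w2 z2s i) s y z1 z2) * d1 (fst s) sh) ` UNIV)))"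
    by (rule main_gen[where Dk="\<lambda>s sh. d1 (fst s) sh" and Hk="\<lambda>i w1 w2 z1s z2s. psi1 i (enc_seq n phi1 w1 z1s) z1s", OF assms(3) assms(4)])
  have B: "expect n M1 M2 PS W phi1 phi2 (\<lambda>w1 w2 ss ys z1s z2s. (1 / real n) * (\<Sum>i<n. d2 (snd (ss!i)) (psi2 i (enc_seq n phi2 w2 z2s) z2s)))
    \<ge> (1 / real n) * (\<Sum>i<n. expect n M1 M2 PS W phi1 phi2 (\<lambda>w1 w2 ss ys z1s z2s.
          \<Sum>z1\<in>UNIV. \<Sum>z2\<in>UNIV. Min ((\<lambda>sh. \<Sum>s\<in>UNIV. PS s * (\<Sum>y\<in>UNIV. W (enc_sym phi1 w1 z1s i) (enc_sym phi2 w2 z2s i) s y z1 z2) * d2 (snd s) sh) ` UNIV)))"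
    by (rule main_gen[where Dk="\<lambda>s sh. d2 (snd s) sh" and Hk="\<lambda>i w1 w2 z1s z2s. psi2 i (enc_seq n phi2 w2 z2s) z2s", OF assms(3) assms(4)])
  show ?thesis unfolding cost1_def cost2_def using A B by simp
qed

end
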